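(* Let $X$ be a real $\omega$-LUR Banach space in which there is a big point $u\in S_X$. Then $X$ is convex-transitive.
   Context: $X$ is $\omega$-LUR if for every $x\in S_X$ and every $(x_n)\subset B_X$ with $\|x+x_n\|\to 2$ one has $x_n\to x$ weakly. $\mathcal{G}_X$ is the group of surjective linear isometries of $X$; $x\in S_X$ is a big point if $\overline{\mathrm{conv}}(\{T(x):T\in\mathcal{G}_X\})=B_X$; $X$ is convex-transitive if every $x\in S_X$ is a big point. *)

theory Defs
  imports "HOL-Analysis.Analysis"
begin

definition weakly_convergent_to :: "(nat \<Rightarrow> 'a::real_normed_vector) \<Rightarrow> 'a \<Rightarrow> bool" where
  "weakly_convergent_to xs x \<longleftrightarrow>
     (\<forall>f::'a \<Rightarrow> real. bounded_linear f \<longrightarrow> (\<lambda>n. f (xs n)) \<longlonglongrightarrow> f x)"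

definition omega_LUR :: "'a::real_normed_vector itself \<Rightarrow> bool" where
  "omega_LUR _ \<longleftrightarrow>
     (\<forall>(x::'a) xs. x \<in> sphere 0 1 \<longrightarrow> (\<forall>n. xs n \<in> cball 0 1) \<longrightarrow>
        (\<lambda>n. norm (x + xs n)) \<longlonglongrightarrow> 2 \<longrightarrow> weakly_convergent_to xs x)"

definition isometry_group :: "('a::real_normed_vector \<Rightarrow> 'a) set" where
  "isometry_group = {T. linear T \<and> (\<forall>x. norm (T x) = norm x) \<and> surj T}"

definition big_point :: "'a::real_normed_vector \<Rightarrow> bool" where
  "big_point x \<longleftrightarrow> x \<in> sphere 0 1 \<and>
     closure (convex hull {T x | T. T \<in> isometry_group}) = cball 0 1"

definition convex_transitive :: "'a::real_normed_vector itself \<Rightarrow> bool" where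
  "convex_transitive _ \<longleftrightarrow> (\<forall>x::'a. x \<in> sphere 0 1 \<longrightarrow> big_point x)"

end

theory Submission
  imports Defs
begin


definition sublin :: "('a::real_vector \<Rightarrow> real) \<Rightarrow> bool" where
  "sublin p \<longleftrightarrow> (\<forall>x y. p (x + y) \<le> p x + p y) \<and> (\<forall>c x. c > 0 \<longrightarrow> p (c *\<^sub>R x) = c * p x)"

lemma sublin_0: assumes "sublin p" shows "p 0 = 0"
proof -
  have H: "\<forall>c>0. \<forall>x. p (c *\<^sub>R x) = c * p x" using assms unfolding sublin_def by blast
  have "p ((2::real) *\<^sub>R 0) = 2 * p 0" by (rule H[rule_format]) simp
  hence "p 0 = 2 * p 0" by (simp only: scale_zero_right)
  thus ?thesis by linarith
qed

lemma sublin_scale: assumes "sublin p" "c \<ge> 0" shows "p (c *\<^sub>R x) = c * p x"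
  using assms sublin_0[OF assms(1)] unfolding sublin_def
  by (cases "c = 0") auto

lemma sublin_lower: assumes "sublin p" shows "- p (- x) \<le> p x"
proof -
  have "p (x + - x) \<le> p x + p (- x)" using assms unfolding sublin_def by blast
  thus ?thesis using sublin_0[OF assms] by simp
qed

lemma Inf_add_le:
  fixes A B :: "real set"
  assumes "A \<noteq> {}" "B \<noteq> {}" "\<And>a b. a \<in> A \<Longrightarrow> b \<in> B \<Longrightarrow> v \<le> a + b"
  shows "v \<le> Inf A + Inf B"
proof -
  have "v - Inf B \<le> a" if "a \<in> A" for a
  proof -
    have "v - a \<le> Inf B" using assms(2) by (rule cInf_greatest) (use assms(3) that in force)
    thus ?thesis by simp
  qed
  hence "v - Inf B \<le> Inf A" using assms(1) by (intro cInf_greatest) auto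
  thus ?thesis by simp
qed

lemma minimal_sublin_linear:
  fixes q :: "'a::real_vector \<Rightarrow> real"
  assumes q: "sublin q"
    and minq: "\<And>h. sublin h \<Longrightarrow> (\<forall>y. h y \<le> q y) \<Longrightarrow> h = q"
  shows "linear q"
proof -
  have neg: "q (- x) = - q x" for x
  proof -
    define A where "A y = {q (y + t *\<^sub>R x) - t * q x | t. t \<ge> 0}" for y
    define h where "h y = Inf (A y)" for y
    have Ane: "A y \<noteq> {}" for y unfolding A_def by auto
    have Alow: "- q (- y) \<le> a" if "a \<in> A y" for a y
    proof -
      have "a \<in> {q (y + t *\<^sub>R x) - t * q x | t. t \<ge> 0}" using that by (simp add: A_def)
      then obtain t where t: "t \<ge> 0" "a = q (y + t *\<^sub>R x) - t * q x" by auto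
      have "q (t *\<^sub>R x) \<le> q (y + t *\<^sub>R x) + q (- y)"
        using q unfolding sublin_def by (metis add.commute add_minus_cancel)
      thus ?thesis using t sublin_scale[OF q t(1)] by simp
    qed
    have Abdd: "bdd_below (A y)" for y using Alow by (auto simp: bdd_below_def)
    have hle: "h y \<le> q (y + t *\<^sub>R x) - t * q x" if "t \<ge> 0" for y t
      unfolding h_def by (rule cInf_lower[OF _ Abdd]) (use that A_def in auto)
    have "sublin h"
      unfolding sublin_def
    proof (intro conjI allI impI)
      fix y1 y2
      show "h (y1 + y2) \<le> h y1 + h y2" unfolding h_def
      proof (rule Inf_add_le[OF Ane Ane])
        fix a b assume "a \<in> A y1" "b \<in> A y2"
        then obtain t1 t2 where t: "t1 \<ge> 0" "a = q (y1 + t1 *\<^sub>R x) - t1 * q x"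
          "t2 \<ge> 0" "b = q (y2 + t2 *\<^sub>R x) - t2 * q x" unfolding A_def by auto
        have "h (y1 + y2) \<le> q (y1 + y2 + (t1 + t2) *\<^sub>R x) - (t1 + t2) * q x"
          using hle t by simp
        also have "y1 + y2 + (t1 + t2) *\<^sub>R x = (y1 + t1 *\<^sub>R x) + (y2 + t2 *\<^sub>R x)"
          by (simp add: algebra_simps)
        also have "q \<dots> \<le> q (y1 + t1 *\<^sub>R x) + q (y2 + t2 *\<^sub>R x)" using q unfolding sublin_def by blast
        finally show "Inf (A (y1 + y2)) \<le> a + b" unfolding h_def using t by (simp add: algebra_simps)
      qed
    next
      fix c :: real and y assume c: "c > 0"
      have 1: "h (c *\<^sub>R y) \<le> c * h y"
      proof -
        have "h (c *\<^sub>R y) / c \<le> a" if "a \<in> A y" for a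
        proof -
          obtain t where t: "t \<ge> 0" "a = q (y + t *\<^sub>R x) - t * q x" using \<open>a \<in> A y\<close> unfolding A_def by auto
          have "h (c *\<^sub>R y) \<le> q (c *\<^sub>R y + (c * t) *\<^sub>R x) - (c * t) * q x" using hle t c by simp
          also have "c *\<^sub>R y + (c * t) *\<^sub>R x = c *\<^sub>R (y + t *\<^sub>R x)" by (simp add: algebra_simps)
          also have "q \<dots> = c * q (y + t *\<^sub>R x)" using q c unfolding sublin_def by blast
          finally have "h (c *\<^sub>R y) \<le> c * a" using t by (simp add: right_diff_distrib)
          thus ?thesis using c by (simp add: field_simps mult.commute)
        qed
        hence "h (c *\<^sub>R y) / c \<le> h y" unfolding h_def by (intro cInf_greatest Ane)
        thus ?thesis using c by (simp add: field_simps)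
      qed
      have 2: "c * h y \<le> h (c *\<^sub>R y)"
      proof -
        have "c * h y \<le> a" if "a \<in> A (c *\<^sub>R y)" for a
        proof -
          have "a \<in> {q (c *\<^sub>R y + s *\<^sub>R x) - s * q x | s. s \<ge> 0}" using that by (simp add: A_def)
          then obtain s where s: "s \<ge> 0" "a = q (c *\<^sub>R y + s *\<^sub>R x) - s * q x" by auto
          have "0 \<le> s / c" using s c by simp
          hence "h y \<le> q (y + (s / c) *\<^sub>R x) - (s / c) * q x" by (rule hle)
          hence "c * h y \<le> c * q (y + (s / c) *\<^sub>R x) - s * q x" using c
            by (simp add: field_simps mult_le_cancel_left_pos)
          also have "c * q (y + (s / c) *\<^sub>R x) = q (c *\<^sub>R (y + (s / c) *\<^sub>R x))"
            using q c unfolding sublin_def by simp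
          also have "c *\<^sub>R (y + (s / c) *\<^sub>R x) = c *\<^sub>R y + s *\<^sub>R x" using c by (simp add: algebra_simps)
          finally show ?thesis using s by simp
        qed
        thus ?thesis unfolding h_def by (intro cInf_greatest Ane)
      qed
      show "h (c *\<^sub>R y) = c * h y" using 1 2 by simp
    qed
    moreover have "\<forall>y. h y \<le> q y" using hle[of 0] by simp
    ultimately have "h = q" by (rule minq)
    hence "q (- x) \<le> q (- x + 1 *\<^sub>R x) - 1 * q x" using hle[of 1 "- x"] by simp
    hence "q (- x) \<le> - q x" using sublin_0[OF q] by simp
    thus ?thesis using sublin_lower[OF q, of x] by simp
  qed
  show ?thesis
  proof (rule linearI)
    fix a b
    have "q (a + b) \<le> q a + q b" using q unfolding sublin_def by blast
    moreover have "q (- a + - b) \<le> q (- a) + q (- b)" using q unfolding sublin_def by blast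
    hence "- q (a + b) \<le> - q a - q b" using neg[of "a + b"] neg[of a] neg[of b] by (simp add: add.commute)
    ultimately show "q (a + b) = q a + q b" by simp
  next
    fix r :: real and b
    show "q (r *\<^sub>R b) = r *\<^sub>R q b"
    proof (cases "r \<ge> 0")
      case True thus ?thesis using sublin_scale[OF q] by simp
    next
      case False
      have "q (r *\<^sub>R b) = q ((- r) *\<^sub>R (- b))" by simp
      also have "\<dots> = (- r) * q (- b)" using False by (intro sublin_scale[OF q]) auto
      finally show ?thesis using neg[of b] by simp
    qed
  qed
qed

theorem hahn_banach_sublin:
  fixes p :: "'a::real_vector \<Rightarrow> real"
  assumes p: "sublin p"
  shows "\<exists>f. linear f \<and> (\<forall>x. f x \<le> p x)"
proof -
  define S where "S = {q. sublin q \<and> (\<forall>x. q x \<le> p x)}"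
  define r where "r = {(q1, q2). q1 \<in> S \<and> q2 \<in> S \<and> (\<forall>x. q2 x \<le> q1 x)}"
  have pS: "p \<in> S" unfolding S_def using p by auto
  have refl: "(q, q) \<in> r" if "q \<in> S" for q using that by (simp add: r_def)
  have Field: "Field r = S"
  proof
    show "Field r \<subseteq> S" by (auto simp: Field_def r_def)
    show "S \<subseteq> Field r" using refl by (meson FieldI1 subsetI)
  qed
  have po: "Partial_order r"
    unfolding partial_order_on_def preorder_on_def refl_on_def trans_def antisym_def Field
    by (auto simp: r_def fun_eq_iff intro: order_trans antisym)
  have ub: "\<exists>u\<in>Field r. \<forall>a\<in>C. (a, u) \<in> r" if C: "C \<in> Chains r" for C
  proof -
    define D where "D = insert p C"
    have CS: "C \<subseteq> S" using C unfolding Chains_def r_def by auto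
    have DS: "D \<subseteq> S" using CS pS D_def by auto
    have Dch: "\<forall>a\<in>D. \<forall>b\<in>D. (\<forall>x. a x \<le> b x) \<or> (\<forall>x. b x \<le> a x)"
    proof (intro ballI)
      fix a b assume "a \<in> D" "b \<in> D"
      thus "(\<forall>x. a x \<le> b x) \<or> (\<forall>x. b x \<le> a x)"
        using C CS unfolding D_def Chains_def r_def S_def by auto
    qed
    define g where "g x = Inf ((\<lambda>q. q x) ` D)" for x
    have low: "- p (- x) \<le> q x" if "q \<in> D" for q x
    proof -
      have "q \<in> S" using that DS by auto
      hence "sublin q" "q (- x) \<le> p (- x)" unfolding S_def by auto
      thus ?thesis using sublin_lower[of q x] by linarith
    qed
    have bdd: "bdd_below ((\<lambda>q. q x) ` D)" for x using low by (auto simp: bdd_below_def)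
    have Dne: "(\<lambda>q. q x) ` D \<noteq> {}" for x unfolding D_def by auto
    have gle: "g x \<le> q x" if "q \<in> D" for q x unfolding g_def by (rule cInf_lower[OF _ bdd]) (use that in auto)
    have sD: "sublin q" if "q \<in> D" for q using that DS S_def by auto
    have "sublin g" unfolding sublin_def
    proof (intro conjI allI impI)
      fix x y
      show "g (x + y) \<le> g x + g y" unfolding g_def
      proof (rule Inf_add_le[OF Dne Dne])
        fix a b assume "a \<in> (\<lambda>q. q x) ` D" "b \<in> (\<lambda>q. q y) ` D"
        then obtain q1 q2 where q: "q1 \<in> D" "q2 \<in> D" "a = q1 x" "b = q2 y" by auto
        have "(\<forall>z. q1 z \<le> q2 z) \<or> (\<forall>z. q2 z \<le> q1 z)" using Dch q(1,2) by blast
        then show "Inf ((\<lambda>q. q (x + y)) ` D) \<le> a + b"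
        proof
          assume "\<forall>z. q1 z \<le> q2 z"
          hence "g (x + y) \<le> q1 x + q1 y" using gle[OF q(1)] sD[OF q(1)] unfolding sublin_def
            by (meson order_trans)
          thus ?thesis using \<open>\<forall>z. q1 z \<le> q2 z\<close> q unfolding g_def by (smt (verit))
        next
          assume "\<forall>z. q2 z \<le> q1 z"
          hence "g (x + y) \<le> q2 x + q2 y" using gle[OF q(2)] sD[OF q(2)] unfolding sublin_def
            by (meson order_trans)
          thus ?thesis using \<open>\<forall>z. q2 z \<le> q1 z\<close> q unfolding g_def by (smt (verit))
        qed
      qed
    next
      fix c :: real and x assume c: "c > 0"
      have "g (c *\<^sub>R x) / c \<le> g x" unfolding g_def[of x]
      proof (rule cInf_greatest[OF Dne])
        fix a assume "a \<in> (\<lambda>q. q x) ` D"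
        then obtain q where q: "q \<in> D" "a = q x" by auto
        have "g (c *\<^sub>R x) \<le> c * q x" using gle[OF q(1)] sD[OF q(1)] c unfolding sublin_def by metis
        thus "g (c *\<^sub>R x) / c \<le> a" using c q by (simp add: field_simps)
      qed
      moreover have "c * g x \<le> g (c *\<^sub>R x)" unfolding g_def[of "c *\<^sub>R x"]
      proof (rule cInf_greatest[OF Dne])
        fix a assume "a \<in> (\<lambda>q. q (c *\<^sub>R x)) ` D"
        then obtain q where q: "q \<in> D" "a = q (c *\<^sub>R x)" by auto
        have "c * g x \<le> c * q x" using gle[OF q(1)] c by simp
        thus "c * g x \<le> a" using q sD[OF q(1)] c unfolding sublin_def by metis
      qed
      ultimately show "g (c *\<^sub>R x) = c * g x" using c by (simp add: field_simps)
    qed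
    moreover have "\<forall>x. g x \<le> p x" using gle[of p] D_def by auto
    ultimately have gS: "g \<in> S" unfolding S_def by auto
    show ?thesis
      unfolding Field using gS gle CS unfolding r_def D_def by auto
  qed
  obtain m where m: "m \<in> S" "\<forall>a\<in>S. (m, a) \<in> r \<longrightarrow> a = m"
    using Zorns_po_lemma[OF po ub] Field by auto
  have "linear m"
  proof (rule minimal_sublin_linear)
    show "sublin m" using m S_def by auto
    fix h assume h: "sublin h" "\<forall>y. h y \<le> m y"
    hence "h \<in> S" using m(1) unfolding S_def by (auto intro: order_trans)
    thus "h = m" using m h(2) m(1) unfolding r_def by auto
  qed
  thus ?thesis using m S_def by auto
qed



lemma separation:
  fixes C :: "'a::real_normed_vector set"
  assumes cvx: "convex C" and cl: "closed C" and ne: "C \<noteq> {}" and u: "u \<notin> C"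
  shows "\<exists>(f::'a \<Rightarrow> real) e. bounded_linear f \<and> e > 0 \<and> (\<forall>c\<in>C. f u + e \<le> f c)"
proof -
  have "open (- C)" using cl by (simp add: open_Compl)
  then obtain e where e: "e > 0" "ball u e \<subseteq> - C" using u open_contains_ball by blast
  have ce: "e \<le> norm (c - u)" if "c \<in> C" for c
  proof (rule ccontr)
    assume "\<not> e \<le> norm (c - u)"
    hence "c \<in> ball u e" by (simp add: dist_norm norm_minus_commute)
    thus False using e that by auto
  qed
  obtain c0 where c0: "c0 \<in> C" using ne by auto
  define A where "A z = {norm (z + s *\<^sub>R (c - u)) - s * e | s c. s \<ge> 0 \<and> c \<in> C}" for z
  define p where "p z = Inf (A z)" for z
  have Ane: "A z \<noteq> {}" for z unfolding A_def using c0 by blast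
  have Alow: "- norm z \<le> a" if "a \<in> A z" for a z
  proof -
    have "a \<in> {norm (z + s *\<^sub>R (c - u)) - s * e | s c. s \<ge> 0 \<and> c \<in> C}" using that by (simp add: A_def)
    then obtain s c where sc: "s \<ge> 0" "c \<in> C" "a = norm (z + s *\<^sub>R (c - u)) - s * e" by blast
    have "norm ((z + s *\<^sub>R (c - u)) - z) \<le> norm (z + s *\<^sub>R (c - u)) + norm z" by (rule norm_triangle_ineq4)
    hence "s * norm (c - u) \<le> norm (z + s *\<^sub>R (c - u)) + norm z" using sc by simp
    moreover have "s * e \<le> s * norm (c - u)" using sc ce by (simp add: mult_left_mono)
    ultimately show ?thesis using sc by linarith
  qed
  have Abdd: "bdd_below (A z)" for z using Alow by (auto simp: bdd_below_def)
  have ple: "p z \<le> norm (z + s *\<^sub>R (c - u)) - s * e" if "s \<ge> 0" "c \<in> C" for z s c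
    unfolding p_def by (rule cInf_lower[OF _ Abdd]) (use that A_def in blast)
  have pnorm: "p z \<le> norm z" for z using ple[of 0 c0 z] c0 by simp
  have "sublin p" unfolding sublin_def
  proof (intro conjI allI impI)
    fix z1 z2
    show "p (z1 + z2) \<le> p z1 + p z2" unfolding p_def[of z1] p_def[of z2]
    proof (rule Inf_add_le[OF Ane Ane])
      fix a b assume "a \<in> A z1" "b \<in> A z2"
      hence "a \<in> {norm (z1 + s *\<^sub>R (c - u)) - s * e | s c. s \<ge> 0 \<and> c \<in> C}"
        "b \<in> {norm (z2 + s *\<^sub>R (c - u)) - s * e | s c. s \<ge> 0 \<and> c \<in> C}" by (simp_all add: A_def)
      then obtain s1 c1 s2 c2 where sc: "s1 \<ge> 0" "c1 \<in> C" "a = norm (z1 + s1 *\<^sub>R (c1 - u)) - s1 * e"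
        "s2 \<ge> 0" "c2 \<in> C" "b = norm (z2 + s2 *\<^sub>R (c2 - u)) - s2 * e" by blast
      show "p (z1 + z2) \<le> a + b"
      proof (cases "s1 + s2 = 0")
        case True
        hence "s1 = 0" "s2 = 0" using sc by auto
        hence "p (z1 + z2) \<le> norm (z1 + z2)" using pnorm by simp
        also have "\<dots> \<le> norm z1 + norm z2" by (rule norm_triangle_ineq)
        finally show ?thesis using sc \<open>s1 = 0\<close> \<open>s2 = 0\<close> by simp
      next
        case False
        define s where "s = s1 + s2"
        have s: "s > 0" using False sc s_def by auto
        define c where "c = (s1 / s) *\<^sub>R c1 + (s2 / s) *\<^sub>R c2"
        have sum1: "s1 / s + s2 / s = 1"
        proof -
          have "s1 / s + s2 / s = (s1 + s2) / s" by (simp add: add_divide_distrib)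
          thus ?thesis using s s_def by simp
        qed
        have "c \<in> C" unfolding c_def
          by (rule convexD[OF cvx sc(2) sc(5)]) (use sc s sum1 in auto)
        have sc': "s *\<^sub>R c = s1 *\<^sub>R c1 + s2 *\<^sub>R c2"
          using s unfolding c_def by (simp add: scaleR_add_right)
        have eq: "s *\<^sub>R (c - u) = s1 *\<^sub>R (c1 - u) + s2 *\<^sub>R (c2 - u)"
          using sc' unfolding s_def by (simp add: algebra_simps)
        have "p (z1 + z2) \<le> norm (z1 + z2 + s *\<^sub>R (c - u)) - s * e"
          using ple[OF _ \<open>c \<in> C\<close>] s by simp
        also have "z1 + z2 + s *\<^sub>R (c - u) = (z1 + s1 *\<^sub>R (c1 - u)) + (z2 + s2 *\<^sub>R (c2 - u))"
          using eq by (simp add: algebra_simps)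
        also have "norm \<dots> \<le> norm (z1 + s1 *\<^sub>R (c1 - u)) + norm (z2 + s2 *\<^sub>R (c2 - u))"
          by (rule norm_triangle_ineq)
        finally show ?thesis using sc s_def by (simp add: algebra_simps)
      qed
    qed
  next
    fix l :: real and z assume l: "l > 0"
    have 1: "p (l *\<^sub>R z) / l \<le> p z" unfolding p_def[of z]
    proof (rule cInf_greatest[OF Ane])
      fix a assume "a \<in> A z"
      hence "a \<in> {norm (z + s *\<^sub>R (c - u)) - s * e | s c. s \<ge> 0 \<and> c \<in> C}" by (simp add: A_def)
      then obtain s c where sc: "s \<ge> 0" "c \<in> C" "a = norm (z + s *\<^sub>R (c - u)) - s * e" by blast
      have "p (l *\<^sub>R z) \<le> norm (l *\<^sub>R z + (l * s) *\<^sub>R (c - u)) - (l * s) * e"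
        using ple[OF _ sc(2)] sc l by simp
      also have "l *\<^sub>R z + (l * s) *\<^sub>R (c - u) = l *\<^sub>R (z + s *\<^sub>R (c - u))" by (simp add: algebra_simps)
      also have "norm \<dots> = l * norm (z + s *\<^sub>R (c - u))" using l by simp
      finally have "p (l *\<^sub>R z) \<le> l * norm (z + s *\<^sub>R (c - u)) - (l * s) * e" .
      moreover have "l * norm (z + s *\<^sub>R (c - u)) - (l * s) * e = l * a"
        by (simp add: sc(3) right_diff_distrib)
      ultimately have "p (l *\<^sub>R z) \<le> l * a" by linarith
      thus "p (l *\<^sub>R z) / l \<le> a" using l by (simp add: field_simps mult.commute)
    qed
    have 2: "l * p z \<le> p (l *\<^sub>R z)" unfolding p_def[of "l *\<^sub>R z"]
    proof (rule cInf_greatest[OF Ane])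
      fix a assume "a \<in> A (l *\<^sub>R z)"
      hence "a \<in> {norm (l *\<^sub>R z + s *\<^sub>R (c - u)) - s * e | s c. s \<ge> 0 \<and> c \<in> C}" by (simp add: A_def)
      then obtain s c where sc: "s \<ge> 0" "c \<in> C" "a = norm (l *\<^sub>R z + s *\<^sub>R (c - u)) - s * e" by blast
      have "0 \<le> s / l" using sc l by simp
      hence "p z \<le> norm (z + (s / l) *\<^sub>R (c - u)) - (s / l) * e" using ple sc by blast
      hence "l * p z \<le> l * norm (z + (s / l) *\<^sub>R (c - u)) - s * e" using l
        by (simp add: field_simps mult_le_cancel_left_pos)
      also have "l * norm (z + (s / l) *\<^sub>R (c - u)) = norm (l *\<^sub>R (z + (s / l) *\<^sub>R (c - u)))" using l by simp
      also have "l *\<^sub>R (z + (s / l) *\<^sub>R (c - u)) = l *\<^sub>R z + s *\<^sub>R (c - u)" using l by (simp add: algebra_simps)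
      finally show "l * p z \<le> a" using sc by simp
    qed
    show "p (l *\<^sub>R z) = l * p z" using 1 2 l by (simp add: field_simps)
  qed
  then obtain f where f: "linear f" "\<And>x. f x \<le> p x" using hahn_banach_sublin by blast
  have fb: "\<bar>f z\<bar> \<le> norm z" for z
  proof -
    have "f z \<le> norm z" using f(2) pnorm order_trans by blast
    moreover have "f (- z) \<le> norm (- z)" using f(2) pnorm order_trans by blast
    ultimately show ?thesis using linear_neg[OF f(1), of z] by simp
  qed
  have "bounded_linear f"
  proof (rule bounded_linear_intro[where K=1])
    fix x y show "f (x + y) = f x + f y" by (rule linear_add[OF f(1)])
  next
    fix r x show "f (r *\<^sub>R x) = r *\<^sub>R f x" by (rule linear_scale[OF f(1)])
  next
    fix x show "norm (f x) \<le> norm x * 1" using fb by simp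
  qed
  moreover have "f u + e \<le> f c" if "c \<in> C" for c
  proof -
    have "f (u - c) \<le> norm (u - c + 1 *\<^sub>R (c - u)) - 1 * e" using f(2) ple[OF _ that, of 1 "u - c"]
      order_trans by fastforce
    thus ?thesis using linear_diff[OF f(1)] by simp
  qed
  ultimately show ?thesis using e(1) by (intro exI[of _ f] exI[of _ e]) auto
qed



lemma iso_linear: "T \<in> isometry_group \<Longrightarrow> linear T" by (simp add: isometry_group_def)
lemma iso_norm: "T \<in> isometry_group \<Longrightarrow> norm (T x) = norm x" by (simp add: isometry_group_def)

lemma iso_inj: assumes "T \<in> isometry_group" shows "inj T"
proof (rule injI)
  fix a b assume "T a = T b"
  hence "T (a - b) = 0" using linear_diff[OF iso_linear[OF assms]] by simp
  hence "norm (a - b) = 0" using iso_norm[OF assms, of "a - b"] by simp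
  thus "a = b" by simp
qed

lemma iso_bl: assumes "T \<in> isometry_group" shows "bounded_linear T"
proof (rule bounded_linear_intro[where K=1])
  fix x y show "T (x + y) = T x + T y" by (rule linear_add[OF iso_linear[OF assms]])
next
  fix r x show "T (r *\<^sub>R x) = r *\<^sub>R T x" by (rule linear_scale[OF iso_linear[OF assms]])
next
  fix x show "norm (T x) \<le> norm x * 1" using iso_norm[OF assms] by simp
qed

lemma iso_comp: assumes "T \<in> isometry_group" "S \<in> isometry_group" shows "T \<circ> S \<in> isometry_group"
proof -
  have "linear (T \<circ> S)" using linear_compose[OF iso_linear[OF assms(2)] iso_linear[OF assms(1)]] .
  moreover have "\<forall>x. norm ((T \<circ> S) x) = norm x" using iso_norm[OF assms(1)] iso_norm[OF assms(2)] by simp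
  moreover have "surj (T \<circ> S)" using comp_surj assms unfolding isometry_group_def by blast
  ultimately show ?thesis unfolding isometry_group_def by blast
qed

lemma iso_inv: assumes T: "T \<in> isometry_group"
  shows "inv T \<in> isometry_group" "T (inv T y) = y"
proof -
  have s: "surj T" using T by (simp add: isometry_group_def)
  show eq: "T (inv T y) = y" for y by (rule surj_f_inv_f[OF s])
  have lin: "linear T" by (rule iso_linear[OF T])
  have "linear (inv T)"
  proof (rule linearI)
    fix a b
    have "T (inv T (a + b)) = T (inv T a + inv T b)" using eq linear_add[OF lin] by metis
    thus "inv T (a + b) = inv T a + inv T b" using iso_inj[OF T] by (simp add: inj_eq)
  next
    fix r a
    have "T (inv T (r *\<^sub>R a)) = T (r *\<^sub>R inv T a)" using eq linear_scale[OF lin] by metis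
    thus "inv T (r *\<^sub>R a) = r *\<^sub>R inv T a" using iso_inj[OF T] by (simp add: inj_eq)
  qed
  moreover have "norm (inv T x) = norm x" for x using iso_norm[OF T, of "inv T x"] eq by simp
  moreover have "surj (inv T)" by (rule inj_imp_surj_inv[OF iso_inj[OF T]])
  ultimately show "inv T \<in> isometry_group" by (simp add: isometry_group_def)
qed

lemma id_iso: "id \<in> isometry_group"
  using bounded_linear.linear[OF bounded_linear_ident] unfolding isometry_group_def id_def by simp



theorem proposition3p4:
  assumes "omega_LUR TYPE('a::banach)"
    and "u \<in> sphere (0::'a) 1" and "big_point u"
  shows "convex_transitive TYPE('a)"
  unfolding convex_transitive_def
proof (intro allI impI)
  fix x :: 'a assume x: "x \<in> sphere 0 1"
  define G where "G = (isometry_group :: ('a \<Rightarrow> 'a) set)"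
  define Ox where "Ox = {T x | T. T \<in> G}"
  define Ou where "Ou = {T u | T. T \<in> G}"
  define C where "C = closure (convex hull Ox)"
  have nx: "norm x = 1" using x by simp
  have nu: "norm u = 1" using assms(2) by simp
  have bigu: "closure (convex hull Ou) = cball 0 1" using assms(3) unfolding big_point_def Ou_def G_def by simp
  have Ccv: "convex C" unfolding C_def by (simp add: convex_closure)
  have Ccl: "closed C" unfolding C_def by simp
  have OxC: "Ox \<subseteq> C" unfolding C_def by (rule order_trans[OF hull_subset closure_subset])
  have "x = id x" by simp
  hence "x \<in> Ox" unfolding Ox_def G_def using id_iso by blast
  hence xC: "x \<in> C" using OxC by blast
  have Csub: "C \<subseteq> cball 0 1"
  proof -
    have "Ox \<subseteq> cball 0 1" unfolding Ox_def G_def using nx by (auto simp: iso_norm)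
    hence "convex hull Ox \<subseteq> cball 0 1" by (rule hull_minimal) (rule convex_cball)
    thus ?thesis unfolding C_def by (rule closure_minimal) (rule closed_cball)
  qed
  have inv: "T ` C \<subseteq> C" if T: "T \<in> G" for T
  proof -
    have "T ` Ox \<subseteq> Ox"
    proof
      fix z assume "z \<in> T ` Ox"
      then obtain S where S: "S \<in> G" "z = T (S x)" unfolding Ox_def by blast
      have "T \<circ> S \<in> G" using iso_comp T S(1) unfolding G_def by blast
      moreover have "z = (T \<circ> S) x" using S(2) by simp
      ultimately show "z \<in> Ox" unfolding Ox_def by blast
    qed
    hence "convex hull (T ` Ox) \<subseteq> convex hull Ox" by (rule hull_mono)
    hence "T ` (convex hull Ox) \<subseteq> convex hull Ox"
      using convex_hull_linear_image[OF iso_linear[OF T[unfolded G_def]]] by simp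
    also have "\<dots> \<subseteq> C" unfolding C_def by (rule closure_subset)
    finally have img: "T ` (convex hull Ox) \<subseteq> C" .
    have cont: "continuous_on (closure (convex hull Ox)) T"
      using iso_bl[OF T[unfolded G_def]] linear_continuous_on by blast
    show ?thesis unfolding C_def by (rule image_closure_subset[OF cont Ccl[unfolded C_def] img[unfolded C_def]])
  qed
  have uC: "u \<in> C"
  proof (rule ccontr)
    assume nuC: "u \<notin> C"
    obtain f :: "'a \<Rightarrow> real" and e where f: "bounded_linear f" "e > 0" "\<And>c. c \<in> C \<Longrightarrow> f u + e \<le> f c"
      using separation[OF Ccv Ccl _ nuC] xC by (metis empty_iff)
    have ex: "\<exists>T\<in>G. 2 - inverse (real (Suc n)) < norm (x + T u)" for n
    proof (rule ccontr)
      define \<epsilon> where "\<epsilon> = inverse (real (Suc n))"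
      have ep: "\<epsilon> > 0" unfolding \<epsilon>_def by simp
      assume nt: "\<not> (\<exists>T\<in>G. 2 - inverse (real (Suc n)) < norm (x + T u))"
      have le: "norm (x + T u) \<le> 2 - \<epsilon>" if "T \<in> G" for T
      proof -
        have "\<not> (2 - inverse (real (Suc n)) < norm (x + T u))" using nt that by blast
        thus ?thesis unfolding \<epsilon>_def by linarith
      qed
      have nn: "norm (- a - b) = norm (a + b)" for a b :: 'a
      proof -
        have "- a - b = - (a + b)" by simp
        thus ?thesis by (simp only: norm_minus_cancel)
      qed
      have "Ou \<subseteq> cball (- x) (2 - \<epsilon>)"
      proof
        fix z assume "z \<in> Ou"
        then obtain T where T: "T \<in> G" "z = T u" unfolding Ou_def by blast
        have "dist (- x) z = norm (- x - T u)" using T(2) by (simp add: dist_norm)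
        hence "dist (- x) z = norm (x + T u)" using nn by simp
        thus "z \<in> cball (- x) (2 - \<epsilon>)" using le[OF T(1)] by simp
      qed
      hence hs: "convex hull Ou \<subseteq> cball (- x) (2 - \<epsilon>)" by (rule hull_minimal) (rule convex_cball)
      have "x \<in> cball 0 1" using nx by simp
      hence "x \<in> closure (convex hull Ou)" using bigu by simp
      hence "\<forall>e>0. \<exists>y\<in>convex hull Ou. dist y x < e" by (simp only: closure_approachable)
      then obtain y where y: "y \<in> convex hull Ou" "dist y x < \<epsilon>" using ep by blast
      have "y \<in> cball (- x) (2 - \<epsilon>)" using hs y(1) by (rule subsetD)
      hence "dist (- x) y \<le> 2 - \<epsilon>" by simp
      hence "norm (- x - y) \<le> 2 - \<epsilon>" by (simp add: dist_norm)
      hence "norm (x + y) \<le> 2 - \<epsilon>" using nn by simp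
      moreover have "norm (2 *\<^sub>R x) \<le> norm (x + y) + norm (x - y)"
        using norm_triangle_ineq[of "x + y" "x - y"] by (simp add: scaleR_2)
      moreover have "norm (x - y) < \<epsilon>" using y(2) by (simp add: dist_norm norm_minus_commute)
      moreover have "norm (2 *\<^sub>R x) = 2" using nx by simp
      ultimately show False by linarith
    qed
    hence ch: "\<forall>n. \<exists>T. T \<in> G \<and> 2 - inverse (real (Suc n)) < norm (x + T u)" by blast
    obtain T where T0: "\<forall>n. T n \<in> G \<and> 2 - inverse (real (Suc n)) < norm (x + T n u)"
      using choice[OF ch] by blast
    hence T: "\<And>n. T n \<in> G" "\<And>n. 2 - inverse (real (Suc n)) < norm (x + T n u)" by auto
    define xs where "xs n = inv (T n) x" for n
    have xsG: "inv (T n) \<in> G" for n unfolding G_def by (rule iso_inv(1)) (use T(1) G_def in simp)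
    have "xs n \<in> Ox" for n unfolding Ox_def xs_def using xsG by blast
    hence xsC: "xs n \<in> C" for n using OxC by blast
    have nxs: "xs n \<in> cball 0 1" for n
      using iso_norm[OF xsG[of n, unfolded G_def]] nx unfolding xs_def by simp
    have eqn: "norm (u + xs n) = norm (x + T n u)" for n
    proof -
      have Tn: "T n \<in> isometry_group" using T(1) unfolding G_def by blast
      have "norm (u + xs n) = norm (T n (u + xs n))" using iso_norm[OF Tn] by simp
      also have "T n (u + xs n) = T n u + T n (xs n)" by (rule linear_add[OF iso_linear[OF Tn]])
      also have "T n (xs n) = x" unfolding xs_def by (rule iso_inv(2)[OF Tn])
      finally show ?thesis by (simp add: add.commute)
    qed
    have lim: "(\<lambda>n. norm (u + xs n)) \<longlonglongrightarrow> 2"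
    proof (rule tendsto_sandwich[where f="\<lambda>n. 2 - inverse (real (Suc n))" and h="\<lambda>n. 2"])
      show "\<forall>\<^sub>F n in sequentially. 2 - inverse (real (Suc n)) \<le> norm (u + xs n)"
        using T(2) eqn by (intro always_eventually allI) (simp add: less_imp_le)
      show "\<forall>\<^sub>F n in sequentially. norm (u + xs n) \<le> 2"
      proof (intro always_eventually allI)
        fix n
        have "norm (u + xs n) \<le> norm u + norm (xs n)" by (rule norm_triangle_ineq)
        thus "norm (u + xs n) \<le> 2" using nu nxs[of n] by simp
      qed
      show "(\<lambda>n. 2 - inverse (real (Suc n))) \<longlonglongrightarrow> (2::real)"
        using tendsto_diff[OF tendsto_const LIMSEQ_inverse_real_of_nat, of 2] by simp
      show "(\<lambda>n. 2::real) \<longlonglongrightarrow> 2" by simp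
    qed
    have H: "\<And>(y::'a) ys. y \<in> sphere 0 1 \<Longrightarrow> (\<forall>n. ys n \<in> cball 0 1) \<Longrightarrow>
        (\<lambda>n. norm (y + ys n)) \<longlonglongrightarrow> 2 \<Longrightarrow> weakly_convergent_to ys y"
      using assms(1) unfolding omega_LUR_def by blast
    have "weakly_convergent_to xs u" by (rule H[OF assms(2)]) (use nxs lim in auto)
    hence "(\<lambda>n. f (xs n)) \<longlonglongrightarrow> f u" using f(1) unfolding weakly_convergent_to_def by auto
    moreover have "\<forall>n. f u + e \<le> f (xs n)" using f(3) xsC by auto
    ultimately have "f u + e \<le> f u" by (intro LIMSEQ_le_const) auto
    thus False using f(2) by simp
  qed
  have "Ou \<subseteq> C" unfolding Ou_def using inv uC by blast
  hence "convex hull Ou \<subseteq> C" using Ccv by (rule hull_minimal)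
  hence "closure (convex hull Ou) \<subseteq> C" using Ccl by (rule closure_minimal)
  hence "cball 0 1 \<subseteq> C" using bigu by simp
  hence "C = cball 0 1" using Csub by (rule equalityI[rotated])
  thus "big_point x" unfolding big_point_def C_def Ox_def G_def using x by simp
qed


end
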